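(* Let $\ell \in \mathscr{L}_q$ and let $H_q[N(v_\ell)]$ be the subgraph of $H_q$ induced on the neighbourhood of $v_\ell$. Then the edge set of $H_q[N(v_\ell)]$ is the edge-disjoint union of the edge sets of the following cliques: (i) $q+1$ cliques of order $q^2-1$, namely $C_p \setminus \{v_\ell\}$ for the $q+1$ points $p \in \ell \cap \mathscr{U}_q$ (these are pairwise vertex-disjoint); and (ii) $q^3-q$ cliques of order $q+1$, one for each point $p \in \mathscr{U}_q \setminus \ell$, namely $C_p \cap N(v_\ell)$, consisting of the $q+1$ secants through $p$ and through a point of $\ell \cap \mathscr{U}_q$. Every edge of $H_q[N(v_\ell)]$ lies in exactly one of these cliques. In particular, the graph $G_{v_\ell}$ is the union of $q^3-q$ edge-disjoint cliques of order $q+1$.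
   Context: Let $q$ be a prime power and $PG(2,q^2)$ the projective plane over $\mathbb{F}_{q^2}$. The Hermitian unital is $\mathscr{U}_q = \{\langle X,Y,Z\rangle : X^{q+1}+Y^{q+1}+Z^{q+1}=0\}$, a set of points of $PG(2,q^2)$. Every line of $PG(2,q^2)$ meets $\mathscr{U}_q$ in exactly $1$ or exactly $q+1$ points; lines meeting it in $q+1$ points are called secants, and $\mathscr{L}_q$ denotes the set of secants. The graph $H_q$ has vertex set $\{v_\ell : \ell \in \mathscr{L}_q\}$, with $v_{\ell_1} \sim v_{\ell_2}$ iff $\ell_1 \neq \ell_2$ and $\ell_1 \cap \ell_2 \in \mathscr{U}_q$. For each point $p \in \mathscr{U}_q$, let $C_p = \{v_\ell : p \in \ell \in \mathscr{L}_q\}$. For $\ell \in \mathscr{L}_q$, $G_{v_\ell}$ denotes the graph on vertex set $N(v_\ell)$ in which $v_{\ell_1} \sim v_{\ell_2}$ iff $\ell_1 \cap \ell_2 \in \mathscr{U}_q \setminus \ell$. *)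

theory Defs
  imports "HOL-Computational_Algebra.Primes" "HOL-Library.Cardinality"
begin

type_synonym 'a vec3 = "'a \<times> 'a \<times> 'a"

definition pp :: "'a::field vec3 \<Rightarrow> 'a vec3 set" where
  "pp v = {(c * fst v, c * fst (snd v), c * snd (snd v)) | c. c \<noteq> 0}"

definition PG_points :: "'a::field vec3 set set" where
  "PG_points = {pp v | v. v \<noteq> (0,0,0)}"

definition PG_line :: "'a::field vec3 \<Rightarrow> 'a vec3 set set" where
  "PG_line u = {pp v | v. v \<noteq> (0,0,0) \<and>
      fst u * fst v + fst (snd u) * fst (snd v) + snd (snd u) * snd (snd v) = 0}"

definition PG_lines :: "'a::field vec3 set set set" where
  "PG_lines = {PG_line u | u. u \<noteq> (0,0,0)}"

(* Hermitian unital over F = F_{q^2} *)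
definition herm_unital :: "nat \<Rightarrow> 'a::field vec3 set set" where
  "herm_unital q = {pp (x,y,z) | x y z. (x,y,z) \<noteq> (0,0,0) \<and>
      x ^ (q+1) + y ^ (q+1) + z ^ (q+1) = 0}"

definition secants :: "nat \<Rightarrow> 'a::field vec3 set set set" where
  "secants q = {l \<in> PG_lines. card (l \<inter> herm_unital q) = q + 1}"

(* adjacency in H_q (vertices v_l identified with secants l) *)
definition H_adj :: "nat \<Rightarrow> 'a::field vec3 set set \<Rightarrow> 'a vec3 set set \<Rightarrow> bool" where
  "H_adj q l1 l2 \<longleftrightarrow> l1 \<in> secants q \<and> l2 \<in> secants q \<and> l1 \<noteq> l2 \<and>
      (\<exists>p. l1 \<inter> l2 = {p} \<and> p \<in> herm_unital q)"

definition nbhd :: "nat \<Rightarrow> 'a::field vec3 set set \<Rightarrow> 'a vec3 set set set" where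
  "nbhd q l = {m. H_adj q l m}"

definition C_pt :: "nat \<Rightarrow> 'a::field vec3 set \<Rightarrow> 'a vec3 set set set" where
  "C_pt q p = {l \<in> secants q. p \<in> l}"

definition ind_edges :: "nat \<Rightarrow> 'a::field vec3 set set \<Rightarrow> 'a vec3 set set set set" where
  "ind_edges q l = {{m1, m2} | m1 m2. m1 \<in> nbhd q l \<and> m2 \<in> nbhd q l \<and> H_adj q m1 m2}"

definition G_edges :: "nat \<Rightarrow> 'a::field vec3 set set \<Rightarrow> 'a vec3 set set set set" where
  "G_edges q l = {{m1, m2} | m1 m2. m1 \<in> nbhd q l \<and> m2 \<in> nbhd q l \<and> m1 \<noteq> m2 \<and>
      (\<exists>p. m1 \<inter> m2 = {p} \<and> p \<in> herm_unital q - l)}"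

definition is_clique :: "nat \<Rightarrow> 'a::field vec3 set set set \<Rightarrow> bool" where
  "is_clique q K \<longleftrightarrow> (\<forall>a\<in>K. \<forall>b\<in>K. a \<noteq> b \<longrightarrow> H_adj q a b)"

definition clique_edges :: "'b set \<Rightarrow> 'b set set" where
  "clique_edges K = {{a, b} | a b. a \<in> K \<and> b \<in> K \<and> a \<noteq> b}"

end

theory Submission
  imports Defs "HOL-Number_Theory.Residues" "HOL-Library.Product_Plus" "HOL-Computational_Algebra.Polynomial"
begin

lemma fin_field_pow_card:
  fixes x :: "'a :: {field,finite}"
  shows   "x ^ card (UNIV :: 'a set) = x"
proof (cases "x = 0")
  case False
  have "x * (\<Prod>y\<in>UNIV-{0}. x * y) = x * x ^ (card (UNIV :: 'a set) - 1) * \<Prod>(UNIV-{0})"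
    by (simp add: prod.distrib mult_ac)
  also have "x * x ^ (card (UNIV :: 'a set) - 1) = x ^ Suc (card (UNIV :: 'a set) - 1)"
    by (subst power_Suc) auto
  also have "Suc (card (UNIV :: 'a set) - 1) = card (UNIV :: 'a set)"
    using finite_UNIV_card_ge_0[where ?'a = 'a] by simp
  also have "(\<Prod>y\<in>UNIV-{0}. x * y) = (\<Prod>y\<in>UNIV-{0}. y)"
    by (rule prod.reindex_bij_witness[of _ "\<lambda>y. y / x" "\<lambda>y. x * y"]) (use False in auto)
  finally show ?thesis
    by simp
qed (use finite_UNIV_card_ge_0[where ?'a = 'a] in auto)

lemma frob_setup:
  fixes q :: nat
  assumes "\<exists>p k. prime p \<and> k \<ge> 1 \<and> q = p ^ k"
    and "CARD('a::{field,finite}) = q ^ 2"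
  shows "q \<ge> 2 \<and> (\<forall>x y::'a. (x+y)^q = x^q + y^q)"
proof -
  obtain p k where pk: "prime p" "k \<ge> 1" "q = p ^ k" using assms(1) by blast
  have fin: "finite (UNIV::'a set)" by simp
  have pc: "prime CHAR('a)"
    using prime_CHAR_semidom[where ?'a = 'a] finite_imp_CHAR_pos[OF fin] by auto
  have "CHAR('a) dvd p ^ (2*k)" using CHAR_dvd_CARD[where ?'a='a] assms(2) pk
    by (simp add: power_mult mult.commute)
  then have "CHAR('a) dvd p" using pc prime_dvd_power by blast
  then have cp: "CHAR('a) = p" using pc pk(1) by (simp add: primes_dvd_imp_eq)
  have "p \<le> p ^ k" using pk(2) prime_ge_1_nat[OF pk(1)] by (simp add: self_le_power)
  moreover have "2 \<le> p" by (rule prime_ge_2_nat[OF pk(1)])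
  ultimately have "q \<ge> 2" using pk(3) by linarith
  moreover have "\<forall>x y::'a. (x+y)^q = x^q + y^q"
    using freshmans_dream'[OF pc, of q k] cp pk by auto
  ultimately show ?thesis by blast
qed

fun dot :: "'a::field vec3 \<Rightarrow> 'a vec3 \<Rightarrow> 'a" where
  "dot (a1,a2,a3) (b1,b2,b3) = a1*b1 + a2*b2 + a3*b3"
fun cr :: "'a::field vec3 \<Rightarrow> 'a vec3 \<Rightarrow> 'a vec3" where
  "cr (a1,a2,a3) (b1,b2,b3) = (a2*b3 - a3*b2, a3*b1 - a1*b3, a1*b2 - a2*b1)"
fun scl :: "'a::field \<Rightarrow> 'a vec3 \<Rightarrow> 'a vec3" where
  "scl c (a1,a2,a3) = (c*a1, c*a2, c*a3)"
fun vadd :: "'a::field vec3 \<Rightarrow> 'a vec3 \<Rightarrow> 'a vec3" where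
  "vadd (a1,a2,a3) (b1,b2,b3) = (a1+b1, a2+b2, a3+b3)"

lemmas vsimps = dot.simps cr.simps scl.simps vadd.simps
declare vsimps[simp del]

lemma dot_alt: "dot u v = fst u * fst v + fst (snd u) * fst (snd v) + snd (snd u) * snd (snd v)"
  by (cases u rule: prod_cases3; cases v rule: prod_cases3) (auto simp: vsimps)

lemma pp_alt: "pp v = {scl c v | c. c \<noteq> 0}"
  unfolding pp_def by (cases v rule: prod_cases3) (auto simp: vsimps)

lemma PG_line_alt: "PG_line u = {pp v | v. v \<noteq> 0 \<and> dot u v = 0}"
  unfolding PG_line_def dot_alt zero_prod_def by simp

lemma scl_scl: "scl c (scl d v) = scl (c*d) v"
  by (cases v rule: prod_cases3) (auto simp: vsimps mult.assoc)
lemma scl_1[simp]: "scl 1 v = v"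
  by (cases v rule: prod_cases3) (auto simp: vsimps)
lemma scl_eq_0: "scl c v = 0 \<longleftrightarrow> c = 0 \<or> v = 0"
  by (cases v rule: prod_cases3) (auto simp: vsimps zero_prod_def)
lemma scl_zero: "scl 0 v = 0"
  by (cases v rule: prod_cases3) (auto simp: vsimps zero_prod_def)
lemma vadd_zero: "vadd 0 v = v"
  by (cases v rule: prod_cases3) (auto simp: vsimps zero_prod_def)
lemma vadd_zero2: "vadd v 0 = v"
  by (cases v rule: prod_cases3) (auto simp: vsimps zero_prod_def)
lemma cr_line: "cr a (vadd b (scl t a)) = cr a b"
  by (cases a rule: prod_cases3; cases b rule: prod_cases3) (auto simp: vsimps algebra_simps)
lemma cr_line2: "cr (vadd b (scl t a)) (vadd b (scl s a)) = scl (t - s) (cr a b)"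
  by (cases a rule: prod_cases3; cases b rule: prod_cases3) (auto simp: vsimps algebra_simps)
lemma span_resc: "\<beta> \<noteq> 0 \<Longrightarrow> vadd (scl \<alpha> a) (scl \<beta> b) = scl \<beta> (vadd b (scl (\<alpha>/\<beta>) a))"
  by (cases a rule: prod_cases3; cases b rule: prod_cases3) (auto simp: vsimps field_simps)
lemma cr_zero2: "cr a 0 = 0"
  by (cases a rule: prod_cases3) (auto simp: vsimps zero_prod_def)

lemma scl_inj: "v \<noteq> 0 \<Longrightarrow> scl c v = scl d v \<Longrightarrow> c = d"
  by (cases v rule: prod_cases3) (auto simp: vsimps zero_prod_def)

lemma dot_scl: "dot u (scl c v) = c * dot u v"
  by (cases u rule: prod_cases3; cases v rule: prod_cases3) (auto simp: vsimps algebra_simps)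
lemma dot_scl1: "dot (scl c u) v = c * dot u v"
  by (cases u rule: prod_cases3; cases v rule: prod_cases3) (auto simp: vsimps algebra_simps)
lemma dot_vadd: "dot u (vadd v w) = dot u v + dot u w"
  by (cases u rule: prod_cases3; cases v rule: prod_cases3; cases w rule: prod_cases3) (auto simp: vsimps algebra_simps)
lemma cr_self: "cr a a = 0"
  by (cases a rule: prod_cases3) (auto simp: vsimps zero_prod_def)
lemma dot_cr1: "dot (cr a b) a = 0"
  by (cases a rule: prod_cases3; cases b rule: prod_cases3) (auto simp: vsimps algebra_simps)
lemma dot_cr2: "dot (cr a b) b = 0"
  by (cases a rule: prod_cases3; cases b rule: prod_cases3) (auto simp: vsimps algebra_simps)
lemma cr_scl1: "cr (scl c a) b = scl c (cr a b)"
  by (cases a rule: prod_cases3; cases b rule: prod_cases3) (auto simp: vsimps algebra_simps)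
lemma cr_scl2: "cr a (scl c b) = scl c (cr a b)"
  by (cases a rule: prod_cases3; cases b rule: prod_cases3) (auto simp: vsimps algebra_simps)
lemma cr_vadd2: "cr a (vadd b c) = vadd (cr a b) (cr a c)"
  by (cases a rule: prod_cases3; cases b rule: prod_cases3; cases c rule: prod_cases3) (auto simp: vsimps algebra_simps)
lemma cr_anti: "cr a b = scl (-1) (cr b a)"
  by (cases a rule: prod_cases3; cases b rule: prod_cases3) (auto simp: vsimps algebra_simps)
lemma cr_cr: "cr (cr u v) w = vadd (scl (dot u w) v) (scl (- dot v w) u)"
  by (cases u rule: prod_cases3; cases v rule: prod_cases3; cases w rule: prod_cases3) (auto simp: vsimps algebra_simps)

lemma par:
  assumes "v \<noteq> 0" "cr v w = 0"
  shows "\<exists>c. w = scl c v"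
proof -
  obtain v1 v2 v3 where v: "v = (v1,v2,v3)" by (cases v rule: prod_cases3)
  obtain w1 w2 w3 where w: "w = (w1,w2,w3)" by (cases w rule: prod_cases3)
  have e: "v2*w3 = v3*w2" "v3*w1 = v1*w3" "v1*w2 = v2*w1" using assms(2) by (auto simp: v w zero_prod_def vsimps)
  consider "v1 \<noteq> 0" | "v2 \<noteq> 0" | "v3 \<noteq> 0" using assms(1) by (auto simp: v zero_prod_def)
  then show ?thesis
  proof cases
    case 1
    then have "w = scl (w1/v1) v" using e by (auto simp: v w vsimps field_simps; metis mult.commute)
    then show ?thesis by blast
  next
    case 2
    then have "w = scl (w2/v2) v" using e by (auto simp: v w vsimps field_simps; metis mult.commute)
    then show ?thesis by blast
  next
    case 3
    then have "w = scl (w3/v3) v" using e by (auto simp: v w vsimps field_simps; metis mult.commute)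
    then show ?thesis by blast
  qed
qed

lemma pp_scl: "c \<noteq> 0 \<Longrightarrow> pp (scl c v) = pp v"
  unfolding pp_alt
proof (auto simp: scl_scl)
  fix d :: 'a assume "c \<noteq> 0" "d \<noteq> 0"
  then show "\<exists>e. scl d v = scl (e * c) v \<and> e \<noteq> 0"
    by (intro exI[of _ "d/c"]) auto
qed

lemma in_pp_self: "v \<noteq> 0 \<Longrightarrow> v \<in> pp v"
  unfolding pp_alt by (auto intro: exI[of _ 1])

lemma in_pp: "w \<in> pp v \<longleftrightarrow> (\<exists>c. c \<noteq> 0 \<and> w = scl c v)"
  unfolding pp_alt by auto

lemma pp_0: "pp 0 = {0}"
  unfolding pp_alt by (auto simp: scl_eq_0 intro: exI[of _ 1])

lemma zero_notin_pp: "v \<noteq> 0 \<Longrightarrow> 0 \<notin> pp v"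
  unfolding pp_alt by (auto simp: scl_eq_0)

lemma pp_eq_iff:
  assumes "v \<noteq> 0" "w \<noteq> 0"
  shows "pp v = pp w \<longleftrightarrow> cr v w = 0"
proof
  assume "pp v = pp w"
  then have "w \<in> pp v" using in_pp_self[OF assms(2)] by simp
  then obtain c where "w = scl c v" using in_pp[of w v] by blast
  then show "cr v w = 0" by (simp add: cr_scl2 cr_self scl_eq_0)
next
  assume "cr v w = 0"
  then obtain c where c: "w = scl c v" using par assms by blast
  then have "c \<noteq> 0" using assms by (auto simp: scl_eq_0)
  then show "pp v = pp w" by (simp add: c pp_scl)
qed

lemma pp_eq_nz: "pp v = pp w \<Longrightarrow> w \<noteq> 0 \<Longrightarrow> v \<noteq> 0"
  using pp_0 zero_notin_pp in_pp_self by (metis singletonI)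

lemma pp_inter: "pp v \<inter> pp w \<noteq> {} \<Longrightarrow> pp v = pp w"
proof -
  assume "pp v \<inter> pp w \<noteq> {}"
  then obtain x where "x \<in> pp v" "x \<in> pp w" by auto
  then obtain c d where "c \<noteq> 0" "d \<noteq> 0" "x = scl c v" "x = scl d w" using in_pp by metis
  then show ?thesis using pp_scl by metis
qed

lemma on_line: "pp v \<in> PG_line u \<longleftrightarrow> v \<noteq> 0 \<and> dot u v = 0"
proof
  assume "pp v \<in> PG_line u"
  then obtain w where w: "pp v = pp w" "w \<noteq> 0" "dot u w = 0" unfolding PG_line_alt by auto
  then have v0: "v \<noteq> 0" using pp_eq_nz by blast
  have "w \<in> pp v" using w in_pp_self[OF w(2)] by simp
  then obtain c where "c \<noteq> 0" "w = scl c v" using in_pp[of w v] by blast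
  then show "v \<noteq> 0 \<and> dot u v = 0" using v0 w by (auto simp: dot_scl)
qed (unfold PG_line_alt, blast)

lemma line_elem: "X \<in> PG_line u \<Longrightarrow> \<exists>v. X = pp v \<and> v \<noteq> 0 \<and> dot u v = 0"
  unfolding PG_line_alt by auto

lemma line_eqI: "(\<And>v. dot u v = 0 \<longleftrightarrow> dot w v = 0) \<Longrightarrow> PG_line u = PG_line w"
  unfolding PG_line_alt by auto

lemma z3: "(0::'a::zero,0::'a,0::'a) = 0" by (simp add: zero_prod_def)

lemma PG_lines_alt: "PG_lines = {PG_line u | u. u \<noteq> 0}"
  unfolding PG_lines_def z3 ..

lemma PG_points_alt: "PG_points = {pp v | v. v \<noteq> 0}"
  unfolding PG_points_def z3 ..

lemma perp2:
  assumes "cr a b \<noteq> 0" "dot u a = 0" "dot u b = 0"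
  shows "\<exists>c. u = scl c (cr a b)"
proof -
  have "cr (cr a b) u = 0"
    using assms cr_cr[of a b u] 
    by (cases a rule: prod_cases3; cases b rule: prod_cases3; cases u rule: prod_cases3)
       (auto simp: vsimps algebra_simps zero_prod_def)
  then show ?thesis using par assms(1) by blast
qed

lemma two_points_one_line:
  assumes "L \<in> PG_lines" "M \<in> PG_lines" "P \<in> L" "P \<in> M" "Q \<in> L" "Q \<in> M" "P \<noteq> Q"
  shows "L = M"
proof -
  obtain u w where uw: "L = PG_line u" "M = PG_line w" "u \<noteq> 0" "w \<noteq> 0"
    using assms(1,2) unfolding PG_lines_alt by auto
  obtain a where a: "P = pp a" "a \<noteq> 0" "dot u a = 0" using line_elem assms uw by blast
  obtain b where b: "Q = pp b" "b \<noteq> 0" "dot u b = 0" using line_elem assms uw by blast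
  have "pp a \<in> PG_line w" "pp b \<in> PG_line w" using assms(4,6) uw a b by simp_all
  then have "dot w a = 0" "dot w b = 0" by (simp_all add: on_line)
  have cab: "cr a b \<noteq> 0" using pp_eq_iff[OF a(2) b(2)] a(1) b(1) assms(7) by simp
  obtain c where c: "u = scl c (cr a b)" using perp2 cab a b by blast
  obtain d where d: "w = scl d (cr a b)" using perp2 cab \<open>dot w a = 0\<close> \<open>dot w b = 0\<close> by blast
  have "c \<noteq> 0" "d \<noteq> 0" using c d uw by (auto simp: scl_eq_0)
  then have "PG_line u = PG_line w" 
    by (intro line_eqI) (auto simp: c d dot_scl1)
  then show ?thesis using uw by simp
qed

lemma points_line:
  assumes "a \<noteq> 0" "b \<noteq> 0" "pp a \<noteq> pp b"
  shows "PG_line (cr a b) \<in> PG_lines \<and> pp a \<in> PG_line (cr a b) \<and> pp b \<in> PG_line (cr a b)"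
proof -
  have "cr a b \<noteq> 0" using assms pp_eq_iff[OF assms(1,2)] by simp
  then have "PG_line (cr a b) \<in> PG_lines" unfolding PG_lines_alt by blast
  then show ?thesis using assms by (simp add: on_line dot_cr1 dot_cr2)
qed

lemma line_points: "L \<in> PG_lines \<Longrightarrow> X \<in> L \<Longrightarrow> X \<in> PG_points"
  unfolding PG_lines_def PG_points_def PG_line_def by auto


lemma dot_comm: "dot u v = dot v u"
  by (cases u rule: prod_cases3; cases v rule: prod_cases3) (auto simp: vsimps algebra_simps)

lemma span2:
  assumes "cr a b \<noteq> 0" "dot (cr a b) v = 0"
  shows "\<exists>\<alpha> \<beta>. v = vadd (scl \<alpha> a) (scl \<beta> b)"
proof -
  obtain a1 a2 a3 where a: "a = (a1,a2,a3)" by (cases a rule: prod_cases3)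
  obtain b1 b2 b3 where b: "b = (b1,b2,b3)" by (cases b rule: prod_cases3)
  obtain v1 v2 v3 where v: "v = (v1,v2,v3)" by (cases v rule: prod_cases3)
  have e: "(a2*b3 - a3*b2)*v1 + (a3*b1 - a1*b3)*v2 + (a1*b2 - a2*b1)*v3 = 0"
    using assms(2) by (simp add: a b v vsimps)
  consider "a2*b3 - a3*b2 \<noteq> 0" | "a3*b1 - a1*b3 \<noteq> 0" | "a1*b2 - a2*b1 \<noteq> 0"
    using assms(1) by (auto simp: a b vsimps zero_prod_def)
  then show ?thesis
  proof cases
    case 1
    define D where "D = a2*b3 - a3*b2"
    define A where "A = v2*b3 - v3*b2"
    define B where "B = a2*v3 - a3*v2"
    have "D*v1 = A*a1 + B*b1 + ((a2*b3 - a3*b2)*v1 + (a3*b1 - a1*b3)*v2 + (a1*b2 - a2*b1)*v3)" "D*v2 = A*a2 + B*b2" "D*v3 = A*a3 + B*b3"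
      unfolding D_def A_def B_def by (simp_all add: algebra_simps)
    then have "D*v1 = A*a1 + B*b1" "D*v2 = A*a2 + B*b2" "D*v3 = A*a3 + B*b3" using e by simp_all
    then have "v = vadd (scl (A/D) a) (scl (B/D) b)"
      using 1 unfolding D_def[symmetric] by (simp add: a b v vsimps field_simps)
    then show ?thesis by blast
  next
    case 2
    define D where "D = a3*b1 - a1*b3"
    define A where "A = v3*b1 - v1*b3"
    define B where "B = a3*v1 - a1*v3"
    have "D*v1 = A*a1 + B*b1" "D*v2 = A*a2 + B*b2 + ((a2*b3 - a3*b2)*v1 + (a3*b1 - a1*b3)*v2 + (a1*b2 - a2*b1)*v3)" "D*v3 = A*a3 + B*b3"
      unfolding D_def A_def B_def by (simp_all add: algebra_simps)
    then have "D*v1 = A*a1 + B*b1" "D*v2 = A*a2 + B*b2" "D*v3 = A*a3 + B*b3" using e by simp_all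
    then have "v = vadd (scl (A/D) a) (scl (B/D) b)"
      using 2 unfolding D_def[symmetric] by (simp add: a b v vsimps field_simps)
    then show ?thesis by blast
  next
    case 3
    define D where "D = a1*b2 - a2*b1"
    define A where "A = v1*b2 - v2*b1"
    define B where "B = a1*v2 - a2*v1"
    have "D*v1 = A*a1 + B*b1" "D*v2 = A*a2 + B*b2" "D*v3 = A*a3 + B*b3 + ((a2*b3 - a3*b2)*v1 + (a3*b1 - a1*b3)*v2 + (a1*b2 - a2*b1)*v3)"
      unfolding D_def A_def B_def by (simp_all add: algebra_simps)
    then have "D*v1 = A*a1 + B*b1" "D*v2 = A*a2 + B*b2" "D*v3 = A*a3 + B*b3" using e by simp_all
    then have "v = vadd (scl (A/D) a) (scl (B/D) b)"
      using 3 unfolding D_def[symmetric] by (simp add: a b v vsimps field_simps)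
    then show ?thesis by blast
  qed
qed

fun Hq :: "nat \<Rightarrow> 'a::field vec3 \<Rightarrow> 'a" where
  "Hq q (a1,a2,a3) = a1^(q+1) + a2^(q+1) + a3^(q+1)"
fun hf :: "nat \<Rightarrow> 'a::field vec3 \<Rightarrow> 'a vec3 \<Rightarrow> 'a" where
  "hf q (a1,a2,a3) (b1,b2,b3) = a1*b1^q + a2*b2^q + a3*b3^q"
fun sg :: "nat \<Rightarrow> 'a::field vec3 \<Rightarrow> 'a vec3" where
  "sg q (a1,a2,a3) = (a1^q, a2^q, a3^q)"
declare Hq.simps[simp del] hf.simps[simp del] sg.simps[simp del]
lemmas hsimps = Hq.simps hf.simps sg.simps

lemma Hq_scl: "Hq q (scl c v) = c^(q+1) * Hq q v"
  by (cases v rule: prod_cases3) (auto simp: vsimps hsimps algebra_simps power_mult_distrib)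

lemma in_U: "pp v \<in> herm_unital q \<longleftrightarrow> v \<noteq> 0 \<and> Hq q v = 0"
proof
  assume "pp v \<in> herm_unital q"
  then obtain w where w: "pp v = pp w" "w \<noteq> 0" "Hq q w = 0"
    unfolding herm_unital_def z3 by (auto simp: hsimps)
  then have v0: "v \<noteq> 0" using pp_eq_nz by blast
  have "w \<in> pp v" using w in_pp_self[OF w(2)] by simp
  then obtain c where "c \<noteq> 0" "w = scl c v" using in_pp[of w v] by blast
  then show "v \<noteq> 0 \<and> Hq q v = 0" using v0 w by (simp add: Hq_scl)
next
  assume "v \<noteq> 0 \<and> Hq q v = 0"
  then show "pp v \<in> herm_unital q" unfolding herm_unital_def z3
    by (cases v rule: prod_cases3) (auto simp: hsimps)
qed

lemma U_elem: "X \<in> herm_unital q \<Longrightarrow> \<exists>v. X = pp v \<and> v \<noteq> 0 \<and> Hq q v = 0"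
  unfolding herm_unital_def z3 by (auto simp: hsimps)

lemma card_roots_le:
  fixes a b :: "'a::field"
  assumes "n \<ge> 2"
  shows "card {x. x^n + a*x + b = 0} \<le> n"
proof -
  define p where "p = monom (1::'a) n + [:b, a:]"
  have "degree [:b, a:] \<le> 1" by (auto simp: degree_pCons_eq_if)
  then have d1: "degree [:b, a:] < degree (monom (1::'a) n)" using assms
    by (simp add: degree_monom_eq)
  have dp: "degree p = n" unfolding p_def using degree_add_eq_left[OF d1] by (simp add: degree_monom_eq)
  then have "p \<noteq> 0" using assms by auto
  then have "card {x. poly p x = 0} \<le> n" using card_poly_roots_bound dp by metis
  moreover have "{x. poly p x = 0} = {x. x^n + a*x + b = 0}"
    unfolding p_def by (auto simp: poly_monom algebra_simps)
  ultimately show ?thesis by simp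
qed

lemma fiber_count:
  assumes "finite A" "finite B" "f ` A \<subseteq> B" "card B \<le> b"
    and "\<And>y. y \<in> B \<Longrightarrow> card {x\<in>A. f x = y} \<le> k" "card A = b * k" "y \<in> B"
  shows "card {x\<in>A. f x = y} = k"
proof (rule ccontr)
  assume ne: "card {x\<in>A. f x = y} \<noteq> k"
  have "A = (\<Union>y\<in>B. {x\<in>A. f x = y})" using assms(3) by auto
  moreover have "card (\<Union>y\<in>B. {x\<in>A. f x = y}) = (\<Sum>y\<in>B. card {x\<in>A. f x = y})"
    by (rule card_UN_disjoint) (use assms(1,2) in auto)
  ultimately have "card A = (\<Sum>y\<in>B. card {x\<in>A. f x = y})" by simp
  also have "\<dots> < (\<Sum>y\<in>B. k)"
  proof (intro sum_strict_mono_ex1[OF assms(2)])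
    show "\<forall>x\<in>B. card {xa \<in> A. f xa = x} \<le> k" using assms(5) by blast
    have "card {x\<in>A. f x = y} < k" using assms(5)[OF assms(7)] ne by simp
    then show "\<exists>a\<in>B. card {x \<in> A. f x = a} < k" using assms(7) by blast
  qed
  also have "\<dots> \<le> b * k" using assms(4) by simp
  finally show False using assms(6) by simp
qed


locale hu =
  fixes q :: nat and ty :: "'a::{field,finite} itself"
  assumes q2: "q \<ge> 2" and cardF: "CARD('a) = q^2"
    and frob: "\<And>x y::'a. (x+y)^q = x^q + y^q"
begin

lemma powqq: "((x::'a)^q)^q = x"
proof -
  have "((x::'a)^q)^q = x ^ CARD('a)" by (simp add: cardF power_mult[symmetric] power2_eq_square)
  then show ?thesis by (simp add: fin_field_pow_card)
qed

lemma frob0: "(0::'a)^q = 0" using q2 by simp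

lemma frob_minus: "(-(x::'a))^q = - (x^q)"
proof -
  have "(x + -x)^q = x^q + (-x)^q" by (rule frob)
  then show ?thesis using frob0 by (simp add: eq_neg_iff_add_eq_0 add.commute)
qed

lemma frob_diff: "((x::'a) - y)^q = x^q - y^q"
  using frob[of x "-y"] frob_minus[of y] by simp

lemma frob_inj: "(x::'a)^q = y^q \<Longrightarrow> x = y"
  by (metis powqq)

lemma frob_zero_iff: "(x::'a)^q = 0 \<longleftrightarrow> x = 0"
  using frob_inj frob0 by metis

lemma frob3: "((x::'a) + y + z)^q = x^q + y^q + z^q"
  by (simp add: frob)

definition Fq :: "'a set" where "Fq = {y. y^q = y}"

lemma card_Fq: "card Fq \<le> q"
proof -
  have "Fq = {x. x^q + (-1)*x + 0 = 0}" unfolding Fq_def by auto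
  then show ?thesis using card_roots_le[OF q2] by metis
qed

lemma zero_Fq: "0 \<in> Fq" unfolding Fq_def using frob0 by simp

lemma card_UNIV_F: "card (UNIV::'a set) = q*q"
  using cardF by (simp add: power2_eq_square)

lemma trace_fib:
  assumes "(y::'a)^q = y"
  shows "card {s::'a. s + s^q = y} = q"
proof -
  have "card {x\<in>(UNIV::'a set). x + x^q = y} = q"
  proof (rule fiber_count[where B=Fq and b=q])
    show "(\<lambda>x. x + x^q) ` UNIV \<subseteq> Fq" unfolding Fq_def by (auto simp: frob powqq add.commute)
    show "card Fq \<le> q" by (rule card_Fq)
    show "card {x \<in> UNIV. x + x^q = z} \<le> q" if "z \<in> Fq" for z
    proof -
      have "{x \<in> UNIV. x + x^q = z} = {x. x^q + 1*x + (-z) = 0}" by (auto simp: algebra_simps)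
      then show ?thesis using card_roots_le[OF q2] by metis
    qed
    show "CARD('a) = q * q" by (rule card_UNIV_F)
    show "y \<in> Fq" using assms unfolding Fq_def by simp
  qed auto
  moreover have "{x\<in>(UNIV::'a set). x + x^q = y} = {s. s + s^q = y}" by blast
  ultimately show ?thesis by simp
qed

lemma norm_Fq: "((x::'a)^(q+1))^q = x^(q+1)"
proof -
  have "((x::'a)^(q+1))^q = (x^q)^q * x^q" by (simp add: power_mult_distrib)
  also have "\<dots> = x * x^q" by (simp add: powqq)
  finally show ?thesis by simp
qed

lemma norm_fib:
  assumes "(y::'a)^q = y" "y \<noteq> 0"
  shows "card {x::'a. x^(q+1) = y} = q+1"
proof -
  have "card {x\<in>(UNIV-{0}::'a set). x^(q+1) = y} = q+1"
  proof (rule fiber_count[where B="Fq-{0}" and b="q-1"])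
    show "(\<lambda>x. x^(q+1)) ` (UNIV-{0}) \<subseteq> Fq-{0}" unfolding Fq_def
      using norm_Fq by auto
    show "card (Fq-{0}) \<le> q-1" using card_Fq zero_Fq by (simp add: card_Diff_singleton)
    show "card {x \<in> UNIV-{0}. x^(q+1) = z} \<le> q+1" if "z \<in> Fq-{0}" for z
    proof -
      have "{x \<in> UNIV-{0}. x^(q+1) = z} \<subseteq> {x. x^(q+1) + 0*x + (-z) = 0}" by auto
      moreover have "card {x::'a. x^(q+1) + 0*x + (-z) = 0} \<le> q+1" using card_roots_le[of "q+1" 0 "-z"] q2 by simp
      ultimately show ?thesis by (meson card_mono finite le_trans)
    qed
    show "card (UNIV-{0::'a}) = (q-1) * (q+1)" using card_UNIV_F q2
      by (simp add: card_Diff_singleton algebra_simps)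
    show "y \<in> Fq-{0}" using assms unfolding Fq_def by simp
  qed auto
  moreover have "{x\<in>(UNIV-{0}::'a set). x^(q+1) = y} = {x::'a. x^(q+1) = y}" using assms(2) by auto
  ultimately show ?thesis by simp
qed


lemma Hq_hf: "Hq q v = hf q v v"
  by (cases v rule: prod_cases3) (simp add: hsimps)

lemma hf_swap: "hf q b a = (hf q a (b::'a vec3))^q"
  by (cases a rule: prod_cases3; cases b rule: prod_cases3)
     (simp add: hsimps frob power_mult_distrib powqq mult.commute)

lemma H_line_gen: "Hq q (vadd b (scl t (a::'a vec3))) =
    hf q b b + t^q * hf q b a + t * hf q a b + t * t^q * hf q a a"
  by (cases a rule: prod_cases3; cases b rule: prod_cases3)
     (simp add: hsimps vsimps frob power_mult_distrib algebra_simps)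

lemma H_line:
  assumes "Hq q a = 0" "Hq q (b::'a vec3) = 0"
  shows "Hq q (vadd b (scl t a)) = t * hf q a b + (t * hf q a b)^q"
  using assms H_line_gen[of b t a] hf_swap[of b a]
  by (simp add: Hq_hf power_mult_distrib)

lemma sg_cr: "sg q (cr a b) = cr (sg q a) (sg q (b::'a vec3))"
  by (cases a rule: prod_cases3; cases b rule: prod_cases3)
     (simp add: hsimps vsimps frob_diff power_mult_distrib)

lemma sg_zero: "sg q (v::'a vec3) = 0 \<longleftrightarrow> v = 0"
  using q2 by (cases v rule: prod_cases3) (simp add: hsimps zero_prod_def frob_zero_iff)

lemma dot_sg: "dot a (sg q b) = hf q a (b::'a vec3)"
  by (cases a rule: prod_cases3; cases b rule: prod_cases3) (simp add: hsimps vsimps)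

lemma hf_nz:
  assumes "Hq q a = 0" "Hq q b = 0" "cr a (b::'a vec3) \<noteq> 0"
  shows "hf q a b \<noteq> 0"
proof
  assume h: "hf q a b = 0"
  have hba: "hf q b a = 0" using h hf_swap[of b a] frob0 by simp
  define d where "d = cr (sg q a) (sg q b)"
  have d0: "d \<noteq> 0" unfolding d_def using assms(3) by (simp add: sg_cr[symmetric] sg_zero)
  have "cr d a = 0" unfolding d_def cr_cr
    using assms h hba by (simp add: dot_comm[of "sg q _"] dot_sg Hq_hf[symmetric] scl_zero vadd_zero)
  then obtain \<alpha> where al: "a = scl \<alpha> d" using par d0 by blast
  have "cr d b = 0" unfolding d_def cr_cr
    using assms h hba by (simp add: dot_comm[of "sg q _"] dot_sg Hq_hf[symmetric] scl_zero vadd_zero)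
  then obtain \<beta> where be: "b = scl \<beta> d" using par d0 by blast
  have "cr a b = 0" unfolding al be by (simp add: cr_scl1 cr_scl2 cr_self scl_eq_0)
  then show False using assms(3) by simp
qed


lemma secant_card:
  assumes L: "L \<in> PG_lines" and P: "P \<in> L" "P \<in> herm_unital q"
    and Q: "Q \<in> L" "Q \<in> herm_unital q" and PQ: "P \<noteq> Q"
  shows "card (L \<inter> (herm_unital q :: 'a vec3 set set)) = q+1"
proof -
  obtain u :: "'a vec3" where u: "L = PG_line u" "u \<noteq> 0" using L unfolding PG_lines_alt by auto
  obtain a :: "'a vec3" where a: "P = pp a" "a \<noteq> 0" "Hq q a = 0" using U_elem P(2) by blast
  obtain b :: "'a vec3" where b: "Q = pp b" "b \<noteq> 0" "Hq q b = 0" using U_elem Q(2) by blast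
  have ua: "dot u a = 0" using P(1) a(1) u(1) by (simp add: on_line)
  have ub: "dot u b = 0" using Q(1) b(1) u(1) by (simp add: on_line)
  have cab: "cr a b \<noteq> 0" using pp_eq_iff[OF a(2) b(2)] a(1) b(1) PQ by simp
  define c where "c = hf q a b"
  have c0: "c \<noteq> 0" unfolding c_def using hf_nz a b cab by blast
  obtain mu where lam: "u = scl mu (cr a b)" using perp2[OF cab ua ub] by blast
  have lam0: "mu \<noteq> 0" using lam u(2) by (auto simp: scl_eq_0)
  define T where "T = {t. t*c + (t*c)^q = 0}"
  define g where "g = (\<lambda>t. pp (vadd b (scl t a)))"
  have nz: "vadd b (scl t a) \<noteq> 0" for t
  proof
    assume "vadd b (scl t a) = 0"
    then have "cr a (vadd b (scl t a)) = 0" by (simp add: cr_zero2)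
    then show False using cab by (simp add: cr_line)
  qed
  have cardT: "card T = q"
  proof -
    have "T = (\<lambda>s. s / c) ` {s. s + s^q = 0}"
      unfolding T_def using c0 by (auto simp: image_iff intro!: exI[of _ "_ * c"])
    moreover have "inj_on (\<lambda>s. s / c) {s. s + s^q = 0}" using c0 by (auto simp: inj_on_def)
    ultimately have "card T = card {s::'a. s + s^q = 0}" by (simp add: card_image)
    also have "\<dots> = q" using trace_fib[of 0] frob0 by simp
    finally show ?thesis .
  qed
  have pa_notin: "pp a \<notin> g ` T"
  proof
    assume "pp a \<in> g ` T"
    then obtain t where "pp a = pp (vadd b (scl t a))" unfolding g_def by auto
    then have "cr a (vadd b (scl t a)) = 0" using pp_eq_iff[OF a(2) nz[of t]] by simp
    then show False using cab by (simp add: cr_line)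
  qed
  have inj: "inj_on g T"
  proof (rule inj_onI)
    fix t s assume "g t = g s"
    then have "cr (vadd b (scl t a)) (vadd b (scl s a)) = 0"
      unfolding g_def using pp_eq_iff[OF nz[of t] nz[of s]] by simp
    then show "t = s" using cab by (simp add: cr_line2 scl_eq_0)
  qed
  have eq: "L \<inter> herm_unital q = insert (pp a) (g ` T)"
  proof
    show "insert (pp a) (g ` T) \<subseteq> L \<inter> herm_unital q"
    proof
      fix X assume "X \<in> insert (pp a) (g ` T)"
      then consider "X = pp a" | t where "t \<in> T" "X = g t" by auto
      then show "X \<in> L \<inter> herm_unital q"
      proof cases
        case 1 then show ?thesis using P a by simp
      next
        case 2
        have "Hq q (vadd b (scl t a)) = 0" using 2(1) H_line[OF a(3) b(3)] unfolding T_def c_def by simp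
        moreover have "dot u (vadd b (scl t a)) = 0" using ua ub by (simp add: dot_vadd dot_scl)
        ultimately show ?thesis using 2(2) nz[of t] u(1) unfolding g_def by (simp add: on_line in_U)
      qed
    qed
  next
    show "L \<inter> herm_unital q \<subseteq> insert (pp a) (g ` T)"
    proof
      fix X assume X: "X \<in> L \<inter> herm_unital q"
      obtain w :: "'a vec3" where w: "X = pp w" "w \<noteq> 0" "Hq q w = 0" using U_elem X by blast
      have "dot u w = 0" using X w(1) u(1) by (simp add: on_line)
      then have "dot (cr a b) w = 0" using lam lam0 by (simp add: dot_scl1)
      then obtain \<alpha> \<beta> where ab: "w = vadd (scl \<alpha> a) (scl \<beta> b)" using span2[OF cab] by blast
      show "X \<in> insert (pp a) (g ` T)"
      proof (cases "\<beta> = 0")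
        case True
        then have "w = scl \<alpha> a" using ab by (simp add: scl_zero vadd_zero2)
        then have "\<alpha> \<noteq> 0" using w(2) by (auto simp: scl_eq_0)
        then have "X = pp a" using w(1) \<open>w = scl \<alpha> a\<close> by (simp add: pp_scl)
        then show ?thesis by simp
      next
        case False
        define t where "t = \<alpha> / \<beta>"
        have w2: "w = scl \<beta> (vadd b (scl t a))" using ab span_resc[OF False] unfolding t_def by simp
        have "X = g t" unfolding g_def using w(1) w2 False by (simp add: pp_scl)
        moreover have "Hq q (vadd b (scl t a)) = 0" using w(3) w2 False by (simp add: Hq_scl)
        then have "t \<in> T" using H_line[OF a(3) b(3)] unfolding T_def c_def by simp
        ultimately show ?thesis by simp
      qed
    qed
  qed
  have "card (insert (pp a) (g ` T)) = q + 1"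
    using pa_notin inj cardT by (simp add: card_image)
  then show ?thesis using eq by simp
qed


end



context hu
begin

lemma card_pp: "v \<noteq> 0 \<Longrightarrow> card (pp (v::'a vec3)) = q*q - 1"
proof -
  assume v: "v \<noteq> 0"
  have "pp v = (\<lambda>c. scl c v) ` (UNIV - {0})" unfolding pp_alt by auto
  moreover have "inj_on (\<lambda>c. scl c v) (UNIV - {0})" using scl_inj[OF v] by (auto simp: inj_on_def)
  ultimately have "card (pp v) = card (UNIV - {0::'a})" by (simp add: card_image)
  also have "\<dots> = q*q - 1" using card_UNIV_F by (simp add: card_Diff_singleton)
  finally show ?thesis .
qed

lemma nf0: "{z::'a. z^(q+1) = 0} = {0}" by auto

lemma card_H0: "card {v::'a vec3. Hq q v = 0} = (q*q-1)*(q*q*q+1) + 1"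
proof -
  define N where "N = (\<lambda>x::'a. x^(q+1))"
  have NF: "(- (N x + N y))^q = - (N x + N y)" for x y
    unfolding N_def by (simp only: frob_minus frob norm_Fq)
  have nfv: "card {z. N z = a} = (if a = 0 then 1 else q+1)" if "a^q = a" for a
    using norm_fib[OF that] nf0 unfolding N_def by auto
  have S: "{v::'a vec3. Hq q v = 0} = (SIGMA x:UNIV. SIGMA y:UNIV. {z. N z = - (N x + N y)})"
  proof -
    have h: "\<And>a b c::'a. a + b + c = 0 \<longleftrightarrow> c = -(a+b)" by (metis add.commute eq_neg_iff_add_eq_0)
    show ?thesis unfolding N_def by (auto simp: hsimps h)
  qed
  have "card {v::'a vec3. Hq q v = 0} = (\<Sum>x\<in>UNIV. \<Sum>y\<in>UNIV. card {z. N z = - (N x + N y)})"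
    unfolding S by (simp add: card_SigmaI)
  also have "\<dots> = (\<Sum>x\<in>UNIV. card {y. N y = - N x} + (q*q - card {y. N y = - N x}) * (q+1))"
  proof (rule sum.cong[OF refl])
    fix x
    define A where "A = {y. N y = - N x}"
    have "(\<Sum>y\<in>UNIV. card {z. N z = - (N x + N y)}) = (\<Sum>y\<in>UNIV. if y \<in> A then 1 else q+1)"
    proof (rule sum.cong[OF refl])
      fix y
      show "card {z. N z = - (N x + N y)} = (if y \<in> A then 1 else q+1)"
      proof -
        have yA: "y \<in> A \<longleftrightarrow> N x + N y = 0" unfolding A_def mem_Collect_eq eq_neg_iff_add_eq_0 by (simp add: add.commute)
        have c: "card {z. N z = - (N x + N y)} = (if N x + N y = 0 then 1 else q+1)"
          using nfv[OF NF[of x y]] by (simp only: neg_equal_0_iff_equal)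
        show ?thesis by (simp only: c yA)
      qed
    qed
    also have "\<dots> = card A + card (UNIV - A) * (q+1)"
      by (simp add: sum.If_cases Int_absorb1 Diff_eq[symmetric] Compl_eq_Diff_UNIV)
    also have "card (UNIV - A) = q*q - card A" using card_UNIV_F by (simp add: card_Diff_subset)
    finally show "(\<Sum>y\<in>UNIV. card {z. N z = - (N x + N y)}) = card {y. N y = - N x} + (q*q - card {y. N y = - N x}) * (q+1)"
      unfolding A_def .
  qed
  also have "\<dots> = (\<Sum>x\<in>(UNIV::'a set). if x = 0 then 1 + (q*q - 1)*(q+1) else (q+1) + (q*q - (q+1))*(q+1))"
  proof (intro sum.cong refl)
    fix x :: 'a
    have "(- N x)^q = - N x" using NF[of x 0] unfolding N_def using q2 by simp
    moreover have "- N x = 0 \<longleftrightarrow> x = 0" unfolding N_def by auto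
    ultimately have "card {y. N y = - N x} = (if x = 0 then 1 else q+1)" using nfv by simp
    then show "card {y. N y = - N x} + (q*q - card {y. N y = - N x}) * (q+1) =
      (if x = 0 then 1 + (q*q - 1)*(q+1) else (q+1) + (q*q - (q+1))*(q+1))" by simp
  qed
  also have "\<dots> = (1 + (q*q - 1)*(q+1)) + (q*q - 1) * ((q+1) + (q*q - (q+1))*(q+1))"
  proof -
    have "card (- {0::'a}) = q*q - 1" using card_UNIV_F by (simp add: Compl_eq_Diff_UNIV card_Diff_singleton)
    then show ?thesis by (simp add: sum.If_cases)
  qed
  also have "\<dots> = (q*q-1)*(q*q*q+1) + 1"
  proof -
    obtain r where r: "q = r + 2" using le_Suc_ex[OF q2] by (auto simp: add.commute)
    have e1: "q*q - 1 = r*r+4*r+3" and e2: "q*q - (q+1) = r*r+3*r+1" unfolding r by (simp_all add: algebra_simps)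
    show ?thesis unfolding e1 e2 unfolding r by (simp add: algebra_simps)
  qed
  finally show ?thesis .
qed

lemma card_U: "card (herm_unital q :: 'a vec3 set set) = q*q*q + 1"
proof -
  define Iso where "Iso = {v::'a vec3. v \<noteq> 0 \<and> Hq q v = 0}"
  have UI: "\<Union>(herm_unital q :: 'a vec3 set set) = Iso"
  proof
    show "\<Union>(herm_unital q :: 'a vec3 set set) \<subseteq> Iso"
    proof
      fix x assume "x \<in> \<Union>(herm_unital q :: 'a vec3 set set)"
      then obtain X where X: "X \<in> herm_unital q" "x \<in> X" by blast
      obtain v :: "'a vec3" where v: "X = pp v" "v \<noteq> 0" "Hq q v = 0" using U_elem X(1) by blast
      obtain c where "c \<noteq> 0" "x = scl c v" using X(2) v(1) in_pp[of x v] by blast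
      then show "x \<in> Iso" unfolding Iso_def using v by (simp add: Hq_scl scl_eq_0)
    qed
    show "Iso \<subseteq> \<Union>(herm_unital q :: 'a vec3 set set)"
    proof
      fix v assume "v \<in> Iso"
      then have "pp v \<in> herm_unital q" "v \<in> pp v" unfolding Iso_def by (simp_all add: in_U in_pp_self)
      then show "v \<in> \<Union>(herm_unital q :: 'a vec3 set set)" by blast
    qed
  qed
  have disj: "pairwise disjnt (herm_unital q :: 'a vec3 set set)"
  proof (rule pairwiseI)
    fix X Y :: "'a vec3 set" assume XY: "X \<in> herm_unital q" "Y \<in> herm_unital q" "X \<noteq> Y"
    obtain v :: "'a vec3" where v: "X = pp v" using U_elem XY(1) by blast
    obtain w :: "'a vec3" where w: "Y = pp w" using U_elem XY(2) by blast
    show "disjnt X Y" using pp_inter[of v w] XY(3) v w by (auto simp: disjnt_def)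
  qed
  have "card Iso = (\<Sum>X\<in>(herm_unital q :: 'a vec3 set set). card X)"
    using card_Union_disjoint[OF disj] UI by simp
  also have "\<dots> = (\<Sum>X\<in>(herm_unital q :: 'a vec3 set set). q*q - 1)"
  proof (rule sum.cong[OF refl])
    fix X :: "'a vec3 set" assume "X \<in> herm_unital q"
    then obtain v :: "'a vec3" where v: "X = pp v" "v \<noteq> 0" using U_elem by blast
    show "card X = q*q - 1" using card_pp v by simp
  qed
  finally have c1: "card Iso = card (herm_unital q :: 'a vec3 set set) * (q*q - 1)" by simp
  have "{v::'a vec3. Hq q v = 0} = insert 0 Iso" unfolding Iso_def
    by (auto simp: hsimps zero_prod_def)
  then have "card {v::'a vec3. Hq q v = 0} = card Iso + 1" unfolding Iso_def by simp
  then have "card (herm_unital q :: 'a vec3 set set) * (q*q - 1) = (q*q*q+1) * (q*q-1)"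
    using c1 card_H0 by (simp add: mult.commute)
  moreover have "q*q - 1 > 0"
  proof -
    have "2*2 \<le> q*q" using q2 mult_le_mono by blast
    then show ?thesis by linarith
  qed
  ultimately show ?thesis by (subst (asm) mult_right_cancel) auto
qed


lemma secants_lines: "m \<in> secants q \<Longrightarrow> m \<in> PG_lines"
  unfolding secants_def by simp

lemma line_two_pts:
  assumes "P \<in> herm_unital q" "Q \<in> (herm_unital q :: 'a vec3 set set)" "P \<noteq> Q"
  shows "\<exists>L. L \<in> secants q \<and> P \<in> L \<and> Q \<in> L"
proof -
  obtain a :: "'a vec3" where a: "P = pp a" "a \<noteq> 0" using U_elem assms(1) by blast
  obtain b :: "'a vec3" where b: "Q = pp b" "b \<noteq> 0" using U_elem assms(2) by blast
  have L: "PG_line (cr a b) \<in> PG_lines" "P \<in> PG_line (cr a b)" "Q \<in> PG_line (cr a b)"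
    using points_line[OF a(2) b(2)] a(1) b(1) assms(3) by auto
  then have "card (PG_line (cr a b) \<inter> herm_unital q) = q + 1"
    using secant_card[OF L(1) L(2) assms(1) L(3) assms(2,3)] by simp
  then show ?thesis using L unfolding secants_def by blast
qed

lemma meet_unique:
  assumes "L \<in> PG_lines" "M \<in> PG_lines" "L \<noteq> M" "P \<in> L" "P \<in> M"
  shows "L \<inter> M = {P}"
  using two_points_one_line[OF assms(1,2)] assms(3-5) by blast

lemma card_Cp:
  assumes p: "p \<in> (herm_unital q :: 'a vec3 set set)"
  shows "card (C_pt q p) = q*q"
proof -
  define C where "C = C_pt q p"
  define A where "A = (\<lambda>m. m \<inter> herm_unital q - {p})"
  have cover: "herm_unital q - {p} = (\<Union>m\<in>C. A m)"
  proof
    show "herm_unital q - {p} \<subseteq> (\<Union>m\<in>C. A m)"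
    proof
      fix r assume r: "r \<in> herm_unital q - {p}"
      then obtain L where "L \<in> secants q" "p \<in> L" "r \<in> L" using line_two_pts[OF p, of r] by auto
      then show "r \<in> (\<Union>m\<in>C. A m)" using r unfolding C_def A_def C_pt_def by blast
    qed
    show "(\<Union>m\<in>C. A m) \<subseteq> herm_unital q - {p}" unfolding A_def by blast
  qed
  have "card (\<Union>m\<in>C. A m) = (\<Sum>m\<in>C. card (A m))"
  proof (rule card_UN_disjoint)
    show "\<forall>i\<in>C. \<forall>j\<in>C. i \<noteq> j \<longrightarrow> A i \<inter> A j = {}"
    proof (intro ballI impI)
      fix i j assume ij: "i \<in> C" "j \<in> C" "i \<noteq> j"
      show "A i \<inter> A j = {}"
      proof (rule ccontr)
        assume "A i \<inter> A j \<noteq> {}"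
        then obtain r where "r \<in> i" "r \<in> j" "r \<noteq> p" unfolding A_def by blast
        moreover have "p \<in> i" "p \<in> j" "i \<in> PG_lines" "j \<in> PG_lines"
          using ij unfolding C_def C_pt_def secants_def by auto
        ultimately show False using two_points_one_line[of i j p r] ij(3) by blast
      qed
    qed
  qed auto
  also have "\<dots> = (\<Sum>m\<in>C. q)"
  proof (rule sum.cong[OF refl])
    fix m assume "m \<in> C"
    then have "card (m \<inter> herm_unital q) = q + 1" "p \<in> m \<inter> herm_unital q"
      using p unfolding C_def C_pt_def secants_def by auto
    then show "card (A m) = q" unfolding A_def by (simp add: card_Diff_singleton)
  qed
  finally have "card (herm_unital q - {p}) = card C * q" using cover by simp
  moreover have "card (herm_unital q - {p}) = q*q*q" using card_U p by (simp add: card_Diff_singleton)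
  ultimately have "card C * q = (q*q) * q" by linarith
  then show ?thesis unfolding C_def using q2 by simp
qed


end

theorem lemma2p4:
  fixes q :: nat and l :: "'a::{field,finite} vec3 set set"
  assumes "\<exists>p k. prime p \<and> k \<ge> 1 \<and> q = p ^ k"
    and "CARD('a) = q ^ 2"
    and "l \<in> secants q"
  defines "U \<equiv> (herm_unital q :: 'a vec3 set set)"
    and "N \<equiv> nbhd q l"
    and "K \<equiv> (\<lambda>p. if p \<in> l then C_pt q p - {l} else C_pt q p \<inter> nbhd q l)"
  shows "card (l \<inter> U) = q + 1 \<and>
    (\<forall>p\<in>l \<inter> U. K p \<subseteq> N \<and> is_clique q (K p) \<and> card (K p) = q ^ 2 - 1) \<and>
    (\<forall>p\<in>l \<inter> U. \<forall>p'\<in>l \<inter> U. p \<noteq> p' \<longrightarrow> K p \<inter> K p' = {}) \<and>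
    card (U - l) = q ^ 3 - q \<and>
    (\<forall>p\<in>U - l. K p \<subseteq> N \<and> is_clique q (K p) \<and> card (K p) = q + 1 \<and>
        K p = {m \<in> secants q. p \<in> m \<and> (\<exists>r\<in>l \<inter> U. r \<in> m)}) \<and>
    inj_on K (U - l) \<and>
    ind_edges q l = (\<Union>p\<in>U. clique_edges (K p)) \<and>
    (\<forall>e\<in>ind_edges q l. \<exists>!p. p \<in> U \<and> e \<in> clique_edges (K p)) \<and>
    G_edges q l = (\<Union>p\<in>U - l. clique_edges (K p)) \<and>
    (\<forall>e\<in>G_edges q l. \<exists>!p. p \<in> U - l \<and> e \<in> clique_edges (K p))"
proof -
  have fs: "q \<ge> 2 \<and> (\<forall>x y::'a. (x+y)^q = x^q + y^q)" using frob_setup[OF assms(1,2)] .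
  interpret hu q "TYPE('a)" by standard (use fs assms(2) in auto)
  have U: "U = herm_unital q" using assms(4) by simp
  have N: "N = nbhd q l" using assms(5) by simp
  have KL: "K p = C_pt q p - {l}" if "p \<in> l" for p using assms(6) that by simp
  have KN: "K p = C_pt q p \<inter> N" if "p \<notin> l" for p using assms(6) that N by simp
  have lsec: "l \<in> secants q" using assms(3) .
  have lL: "l \<in> PG_lines" using lsec secants_lines by blast
  have cl: "card (l \<inter> U) = q + 1" using lsec unfolding U secants_def by simp
  have Nmem: "m \<in> N \<longleftrightarrow> m \<in> secants q \<and> l \<noteq> m \<and> (\<exists>p. l \<inter> m = {p} \<and> p \<in> U)" for m
    unfolding N nbhd_def H_adj_def U using lsec by auto
  have Ksub: "K p \<subseteq> C_pt q p" for p using KL KN by (cases "p \<in> l") auto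
  have adjI: "H_adj q a b" if "a \<in> secants q" "b \<in> secants q" "a \<noteq> b" "p \<in> a" "p \<in> b" "p \<in> U" for a b p
    unfolding H_adj_def using that meet_unique[of a b p] secants_lines U by blast
  have uniq: "p = p'" if "a \<in> C_pt q p" "b \<in> C_pt q p" "a \<in> C_pt q p'" "b \<in> C_pt q p'" "a \<noteq> b" for a b p p'
    using that two_points_one_line[of a b p p'] secants_lines unfolding C_pt_def by blast
  have KsubN: "K p \<subseteq> N" if p: "p \<in> U" for p
  proof (cases "p \<in> l")
    case True
    show ?thesis
    proof
      fix m assume "m \<in> K p"
      then have m: "m \<in> secants q" "p \<in> m" "m \<noteq> l" using KL[OF True] unfolding C_pt_def by auto
      then have "l \<inter> m = {p}" using meet_unique[of l m p] lL secants_lines True by blast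
      then show "m \<in> N" using Nmem m p by blast
    qed
  next
    case False then show ?thesis using KN by blast
  qed
  have Kcl: "is_clique q (K p)" if "p \<in> U" for p
    unfolding is_clique_def
  proof (intro ballI impI)
    fix a b assume "a \<in> K p" "b \<in> K p" "a \<noteq> b"
    then show "H_adj q a b" using Ksub[of p] adjI[of a b p] that unfolding C_pt_def by blast
  qed
  have edge_two: "\<exists>a b. a \<noteq> b \<and> a \<in> S \<and> b \<in> S \<and> a \<in> T \<and> b \<in> T"
    if e12: "e \<in> clique_edges S" "e \<in> clique_edges T" for e and S T :: "'a vec3 set set set"
  proof -
    obtain a b where ab: "e = {a,b}" "a \<in> S" "b \<in> S" "a \<noteq> b" using e12(1) unfolding clique_edges_def by blast
    obtain c d where cd: "e = {c,d}" "c \<in> T" "d \<in> T" "c \<noteq> d" using e12(2) unfolding clique_edges_def by blast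
    have "a \<in> T" "b \<in> T" using ab(1) cd by (auto simp: doubleton_eq_iff)
    then show ?thesis using ab by blast
  qed
  have edge_uniq: "p = p'" if ee: "e \<in> clique_edges (K p)" "e \<in> clique_edges (K p')" for e p p'
  proof -
    obtain a b where "a \<noteq> b" "a \<in> K p" "b \<in> K p" "a \<in> K p'" "b \<in> K p'" using edge_two[OF ee] by blast
    then show ?thesis using uniq[of a p b p'] Ksub[of p] Ksub[of p'] by blast
  qed
  have partB: "K p \<subseteq> N \<and> is_clique q (K p) \<and> card (K p) = q ^ 2 - 1" if p: "p \<in> l \<inter> U" for p
  proof -
    have "l \<in> C_pt q p" using lsec p unfolding C_pt_def by blast
    then have "card (K p) = q*q - 1" using KL[of p] p card_Cp[of p] U by (simp add: card_Diff_singleton)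
    then show ?thesis using KsubN Kcl p by (simp add: power2_eq_square)
  qed
  have partC: "K p \<inter> K p' = {}" if pc: "p \<in> l \<inter> U" "p' \<in> l \<inter> U" "p \<noteq> p'" for p p'
  proof (rule ccontr)
    assume "K p \<inter> K p' \<noteq> {}"
    then obtain m where m: "m \<in> C_pt q p - {l}" "m \<in> C_pt q p' - {l}" using KL pc by auto
    have "l \<in> C_pt q p" "l \<in> C_pt q p'" using lsec pc unfolding C_pt_def by auto
    then show False using uniq[of m p l p'] m pc(3) by blast
  qed
  have partD: "card (U - l) = q ^ 3 - q"
  proof -
    have "U - l = U - (l \<inter> U)" by blast
    then have "card (U - l) = card U - card (l \<inter> U)" by (simp add: card_Diff_subset)
    then show ?thesis using cl card_U U by (simp add: power3_eq_cube)
  qed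
  have Kchar: "K p = {m \<in> secants q. p \<in> m \<and> (\<exists>r\<in>l \<inter> U. r \<in> m)}" if p: "p \<in> U - l" for p
  proof
    show "K p \<subseteq> {m \<in> secants q. p \<in> m \<and> (\<exists>r\<in>l \<inter> U. r \<in> m)}"
    proof
      fix m assume "m \<in> K p"
      then have "m \<in> C_pt q p" "m \<in> N" using KN p by auto
      then show "m \<in> {m \<in> secants q. p \<in> m \<and> (\<exists>r\<in>l \<inter> U. r \<in> m)}"
        using Nmem unfolding C_pt_def by blast
    qed
    show "{m \<in> secants q. p \<in> m \<and> (\<exists>r\<in>l \<inter> U. r \<in> m)} \<subseteq> K p"
    proof
      fix m assume "m \<in> {m \<in> secants q. p \<in> m \<and> (\<exists>r\<in>l \<inter> U. r \<in> m)}"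
      then obtain r where m: "m \<in> secants q" "p \<in> m" "r \<in> l" "r \<in> U" "r \<in> m" by blast
      have "m \<noteq> l" using m p by blast
      then have "l \<inter> m = {r}" using meet_unique[of l m r] lL secants_lines m by blast
      then have "m \<in> N" using Nmem m \<open>m \<noteq> l\<close> by blast
      then show "m \<in> K p" using KN p m unfolding C_pt_def by blast
    qed
  qed
  have partE: "K p \<subseteq> N \<and> is_clique q (K p) \<and> card (K p) = q + 1 \<and>
        K p = {m \<in> secants q. p \<in> m \<and> (\<exists>r\<in>l \<inter> U. r \<in> m)}" if p: "p \<in> U - l" for p
  proof -
    define g where "g = (\<lambda>m. the_elem (l \<inter> m))"
    have gm: "l \<inter> m = {g m}" "g m \<in> U" if "m \<in> K p" for m
    proof -
      obtain r where "l \<inter> m = {r}" "r \<in> U" using \<open>m \<in> K p\<close> KN p Nmem by blast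
      then show "l \<inter> m = {g m}" "g m \<in> U" unfolding g_def by auto
    qed
    have inj: "inj_on g (K p)"
    proof (rule inj_onI)
      fix m m' assume mm: "m \<in> K p" "m' \<in> K p" "g m = g m'"
      show "m = m'"
      proof (rule ccontr)
        assume ne: "m \<noteq> m'"
        have "m \<in> C_pt q p" "m' \<in> C_pt q p" using mm Ksub by auto
        moreover have "m \<in> C_pt q (g m)" "m' \<in> C_pt q (g m)" 
          using gm[OF mm(1)] gm[OF mm(2)] mm(3) \<open>m \<in> C_pt q p\<close> \<open>m' \<in> C_pt q p\<close>
          unfolding C_pt_def by auto
        ultimately have "p = g m" using uniq ne by blast
        moreover have "g m \<in> l" using gm[OF mm(1)] by auto
        ultimately show False using p by auto
      qed
    qed
    have img: "g ` K p = l \<inter> U"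
    proof
      show "g ` K p \<subseteq> l \<inter> U" using gm by blast
      show "l \<inter> U \<subseteq> g ` K p"
      proof
        fix r assume r: "r \<in> l \<inter> U"
        have "p \<noteq> r" using p r by auto
        then obtain m where m: "m \<in> secants q" "p \<in> m" "r \<in> m"
          using line_two_pts[of p r] p r U by auto
        then have mK: "m \<in> K p" using Kchar[OF p] r by blast
        have "m \<noteq> l" using m p by blast
        then have "l \<inter> m = {r}" using meet_unique[of l m r] lL secants_lines m r by blast
        then have "g m = r" using gm[OF mK] by auto
        then show "r \<in> g ` K p" using mK by blast
      qed
    qed
    have "card (K p) = q + 1" using card_image[OF inj] img cl by simp
    moreover have "K p \<subseteq> N" "is_clique q (K p)" using KsubN Kcl p by auto
    ultimately show ?thesis using Kchar[OF p] by simp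
  qed
  have partF: "inj_on K (U - l)"
  proof (rule inj_onI)
    fix p p' assume pp: "p \<in> U - l" "p' \<in> U - l" "K p = K p'"
    have c: "card (K p) = q + 1" using partE pp(1) by blast
    then have "K p \<noteq> {}" by auto
    then obtain a where a: "a \<in> K p" by blast
    have cq: "card (K p - {a}) = q" using c a by (simp add: card_Diff_singleton)
    have "K p - {a} \<noteq> {}"
    proof
      assume "K p - {a} = {}"
      then have "card (K p - {a}) = 0" by (simp only: card.empty)
      then show False using cq q2 by simp
    qed
    then obtain b where b: "b \<in> K p" "b \<noteq> a" by blast
    show "p = p'" using uniq[of a p b p'] a b pp(3) Ksub[of p] Ksub[of p'] by blast
  qed
  have partG: "ind_edges q l = (\<Union>p\<in>U. clique_edges (K p))"
  proof
    show "ind_edges q l \<subseteq> (\<Union>p\<in>U. clique_edges (K p))"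
    proof
      fix e assume "e \<in> ind_edges q l"
      then obtain m1 m2 where e: "e = {m1, m2}" "m1 \<in> nbhd q l" "m2 \<in> nbhd q l" "H_adj q m1 m2"
        unfolding ind_edges_def by blast
      then obtain p where p: "m1 \<inter> m2 = {p}" "p \<in> herm_unital q" "m1 \<noteq> m2" "m1 \<in> secants q" "m2 \<in> secants q"
        unfolding H_adj_def by blast
      have pU: "p \<in> U" using p(2) U by simp
      have mN: "m1 \<in> N" "m2 \<in> N" using e(2,3) N by simp_all
      have ml: "m1 \<noteq> l" "m2 \<noteq> l" using mN Nmem by blast+
      have mC: "m1 \<in> C_pt q p" "m2 \<in> C_pt q p" using p unfolding C_pt_def by blast+
      have "m1 \<in> K p \<and> m2 \<in> K p"
      proof (cases "p \<in> l")
        case True then show ?thesis using KL[OF True] ml mC by blast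
      next
        case False then show ?thesis using KN[OF False] mN mC by blast
      qed
      then have "e \<in> clique_edges (K p)" unfolding clique_edges_def using e(1) p(3) by blast
      then show "e \<in> (\<Union>p\<in>U. clique_edges (K p))" using pU by blast
    qed
    show "(\<Union>p\<in>U. clique_edges (K p)) \<subseteq> ind_edges q l"
    proof
      fix e assume "e \<in> (\<Union>p\<in>U. clique_edges (K p))"
      then obtain p where p: "p \<in> U" "e \<in> clique_edges (K p)" by blast
      then obtain a b where ab: "e = {a,b}" "a \<in> K p" "b \<in> K p" "a \<noteq> b"
        unfolding clique_edges_def by blast
      have "H_adj q a b" using Kcl[OF p(1)] ab unfolding is_clique_def by blast
      moreover have "a \<in> nbhd q l" "b \<in> nbhd q l" using KsubN[OF p(1)] ab N by auto
      ultimately show "e \<in> ind_edges q l" using ab(1) unfolding ind_edges_def by blast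
    qed
  qed
  have partH: "\<forall>e\<in>ind_edges q l. \<exists>!p. p \<in> U \<and> e \<in> clique_edges (K p)"
  proof
    fix e assume "e \<in> ind_edges q l"
    then obtain p where p: "p \<in> U" "e \<in> clique_edges (K p)" using partG by blast
    show "\<exists>!p. p \<in> U \<and> e \<in> clique_edges (K p)"
    proof (rule ex1I[of _ p])
      show "p \<in> U \<and> e \<in> clique_edges (K p)" using p by blast
      fix p' assume "p' \<in> U \<and> e \<in> clique_edges (K p')"
      then show "p' = p" using edge_uniq[of e p' p] p(2) by blast
    qed
  qed
  have partI: "G_edges q l = (\<Union>p\<in>U - l. clique_edges (K p))"
  proof
    show "G_edges q l \<subseteq> (\<Union>p\<in>U - l. clique_edges (K p))"
    proof
      fix e assume "e \<in> G_edges q l"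
      then obtain m1 m2 p where e: "e = {m1, m2}" "m1 \<in> nbhd q l" "m2 \<in> nbhd q l" "m1 \<noteq> m2"
          "m1 \<inter> m2 = {p}" "p \<in> herm_unital q - l"
        unfolding G_edges_def by blast
      have pU: "p \<in> U - l" using e(6) U by simp
      have mN: "m1 \<in> N" "m2 \<in> N" using e(2,3) N by simp_all
      have ms: "m1 \<in> secants q" "m2 \<in> secants q" using mN Nmem by blast+
      have "m1 \<in> C_pt q p" "m2 \<in> C_pt q p" using ms e(5) unfolding C_pt_def by blast+
      then have "m1 \<in> K p" "m2 \<in> K p" using KN[of p] pU mN by auto
      then have "e \<in> clique_edges (K p)" unfolding clique_edges_def using e(1,4) by blast
      then show "e \<in> (\<Union>p\<in>U - l. clique_edges (K p))" using pU by blast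
    qed
    show "(\<Union>p\<in>U - l. clique_edges (K p)) \<subseteq> G_edges q l"
    proof
      fix e assume "e \<in> (\<Union>p\<in>U - l. clique_edges (K p))"
      then obtain p where p: "p \<in> U - l" "e \<in> clique_edges (K p)" by blast
      then obtain a b where ab: "e = {a,b}" "a \<in> K p" "b \<in> K p" "a \<noteq> b"
        unfolding clique_edges_def by blast
      have "a \<in> N" "b \<in> N" using ab KN[of p] p(1) by auto
      then have abn: "a \<in> nbhd q l" "b \<in> nbhd q l" using N by simp_all
      have "a \<in> C_pt q p" "b \<in> C_pt q p" using ab Ksub[of p] by blast+
      then have "a \<in> PG_lines" "b \<in> PG_lines" "p \<in> a" "p \<in> b" using secants_lines unfolding C_pt_def by blast+
      then have "a \<inter> b = {p}" using meet_unique ab(4) by blast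
      moreover have "p \<in> herm_unital q - l" using p(1) U by simp
      ultimately show "e \<in> G_edges q l" using ab(1,4) abn unfolding G_edges_def by blast
    qed
  qed
  have partJ: "\<forall>e\<in>G_edges q l. \<exists>!p. p \<in> U - l \<and> e \<in> clique_edges (K p)"
  proof
    fix e assume "e \<in> G_edges q l"
    then obtain p where p: "p \<in> U - l" "e \<in> clique_edges (K p)" using partI by blast
    show "\<exists>!p. p \<in> U - l \<and> e \<in> clique_edges (K p)"
    proof (rule ex1I[of _ p])
      show "p \<in> U - l \<and> e \<in> clique_edges (K p)" using p by blast
      fix p' assume "p' \<in> U - l \<and> e \<in> clique_edges (K p')"
      then show "p' = p" using edge_uniq[of e p' p] p(2) by blast
    qed
  qed
  show ?thesis using cl partB partC partD partE partF partG partH partI partJ by (intro conjI) blast+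
qed

end
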